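(* Let $y:\Lambda\to\mathbb R$ and $\alpha\in[Dy]$ be such that $\alpha_b\to0$ as $|b|\to\infty$. Then for any $\alpha'\in[Dy]$, the set $\mathcal C^\pm[\alpha']$ is finite and $$\sum_{C\in\mathcal C^\pm[\alpha']}\int_{\partial C}\alpha'=\sum_{C\in\mathcal C^\pm[\alpha]}\int_{\partial C}\alpha=\int_\Gamma\alpha,$$ where $\Gamma$ is any loop that encloses all cores of $\alpha$, i.e. $\Gamma=\partial A$ for a finite sum $A$ of positively oriented cells containing every element of $\mathcal C^\pm[\alpha]$.
   Context: $\mathsf R_6$ rotation by $\pi/3$, $a_1=(1,0)^T$, $a_i=\mathsf R_6^{i-1}a_1$, $\Lambda:=(\tfrac12,\tfrac{\sqrt3}{6})^T+\{ma_1+na_2:m,n\in\mathbb Z\}$. Bonds $\mathcal B=\{(\xi,\eta)\in\Lambda^2:|\xi-\eta|=1\}$ (ordered pairs), $-b=(\eta,\xi)$, $Dy_b=y(\eta)-y(\xi)$; $|b|$ is the distance from the origin to the closed segment $b$. A cell is a triple $C=(\xi,\zeta,\eta)$ of lattice points pairwise joined by bonds; positively oriented if counterclockwise; $\partial C=(\xi,\zeta)+(\zeta,\eta)+(\eta,\xi)$; for a finite sum $A$ of cells, $\partial A$ is the sum of their boundaries (as formal sums of bonds, where $b+(-b)=0$). For $\alpha:\mathcal B\to\mathbb R$ and a formal sum $\Gamma=\sum_k b_k$, $\int_\Gamma\alpha=\sum_k\alpha_{b_k}$. $[Dy]$ is the set of $\alpha:\mathcal B\to[-\tfrac12,\tfrac12]$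 with $\alpha_{-b}=-\alpha_b$ and $Dy_b-\alpha_b\in\mathbb Z$ for all $b$. A dislocation core of $\alpha$ is a positively oriented cell $C$ with $\int_{\partial C}\alpha\ne0$; $\mathcal C^\pm[\alpha]$ is the set of dislocation cores of $\alpha$. *)

theory Defs
  imports "HOL-Analysis.Analysis" "HOL-Library.Multiset"
begin

text \<open>The plane is identified with the complex numbers. a_1 = 1, a_2 = R_6 a_1 = cis(pi/3).\<close>

definition a1 :: complex where "a1 = 1"
definition a2 :: complex where "a2 = cis (pi / 3)"

definition lattice :: "complex set" where
  "lattice = {Complex (1/2) (sqrt 3 / 6) + of_int m * a1 + of_int n * a2 | m n :: int. True}"

type_synonym bond = "complex \<times> complex"

definition bonds :: "bond set" where
  "bonds = {(\<xi>, \<eta>). \<xi> \<in> lattice \<and> \<eta> \<in> lattice \<and> cmod (\<xi> - \<eta>) = 1}"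

definition neg_bond :: "bond \<Rightarrow> bond" where
  "neg_bond b = (snd b, fst b)"

definition bond_norm :: "bond \<Rightarrow> real" where
  "bond_norm b = infdist 0 (closed_segment (fst b) (snd b))"

definition Dy :: "(complex \<Rightarrow> real) \<Rightarrow> bond \<Rightarrow> real" where
  "Dy y b = y (snd b) - y (fst b)"

definition Dy_class :: "(complex \<Rightarrow> real) \<Rightarrow> (bond \<Rightarrow> real) set" where
  "Dy_class y = {\<alpha>. \<forall>b\<in>bonds. \<alpha> b \<in> {-1/2..1/2} \<and> \<alpha> (neg_bond b) = - \<alpha> b
                      \<and> Dy y b - \<alpha> b \<in> \<int>}"

text \<open>A cell is represented by its set of three vertices (pairwise joined by bonds);
  each such vertex set carries exactly one positive (counterclockwise) orientation,
  so positively oriented cells correspond to these vertex sets.\<close>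
definition pos_cells :: "complex set set" where
  "pos_cells = {T. T \<subseteq> lattice \<and> card T = 3 \<and>
                   (\<forall>p\<in>T. \<forall>q\<in>T. p \<noteq> q \<longrightarrow> (p, q) \<in> bonds)}"

text \<open>The bonds of the boundary of the positively oriented cell with vertex set T:
  (p,q) such that the remaining vertex lies strictly to the left of p -> q.\<close>
definition ccw_bonds :: "complex set \<Rightarrow> bond set" where
  "ccw_bonds T = {(p, q). p \<in> T \<and> q \<in> T \<and> p \<noteq> q \<and>
                     (\<forall>r \<in> T - {p, q}. Im (cnj (q - p) * (r - p)) > 0)}"

text \<open>Formal sums of bonds are multisets of bonds; integral of alpha over a formal sum.\<close>
definition chain_int :: "(bond \<Rightarrow> real) \<Rightarrow> bond multiset \<Rightarrow> real" where
  "chain_int \<alpha> \<Gamma> = sum_mset (image_mset \<alpha> \<Gamma>)"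

definition cell_boundary :: "complex set \<Rightarrow> bond multiset" where
  "cell_boundary T = mset_set (ccw_bonds T)"

text \<open>Boundary of a finite sum (here: finite set) of positively oriented cells.\<close>
definition boundary :: "complex set set \<Rightarrow> bond multiset" where
  "boundary A = (\<Sum>C\<in>A. cell_boundary C)"

definition cores :: "(bond \<Rightarrow> real) \<Rightarrow> complex set set" where
  "cores \<alpha> = {C \<in> pos_cells. chain_int \<alpha> (cell_boundary C) \<noteq> 0}"

end

theory Submission
  imports Defs
begin

lemma lattice_refl:
  assumes "p \<in> lattice" "q \<in> lattice" "z \<in> lattice"
  shows "p + q - z \<in> lattice"
proof -
  obtain m1 n1 where "p = Complex (1/2) (sqrt 3 / 6) + of_int m1 * a1 + of_int n1 * a2"
    using assms(1) unfolding lattice_def by auto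
  moreover obtain m2 n2 where "q = Complex (1/2) (sqrt 3 / 6) + of_int m2 * a1 + of_int n2 * a2"
    using assms(2) unfolding lattice_def by auto
  moreover obtain m3 n3 where "z = Complex (1/2) (sqrt 3 / 6) + of_int m3 * a1 + of_int n3 * a2"
    using assms(3) unfolding lattice_def by auto
  ultimately have "p + q - z = Complex (1/2) (sqrt 3 / 6) + of_int (m1+m2-m3) * a1 + of_int (n1+n2-n3) * a2"
    by (simp add: algebra_simps)
  then show ?thesis unfolding lattice_def by blast
qed

lemma finite_lattice_ball: "finite (lattice \<inter> cball 0 M)"
proof -
  define K where "K = \<lceil>2*\<bar>M\<bar>+3\<rceil>"
  define f where "f = (\<lambda>(m::int,n::int). Complex (1/2) (sqrt 3 / 6) + of_int m * a1 + of_int n * a2)"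
  have "lattice \<inter> cball 0 M \<subseteq> f ` ({-K..K} \<times> {-K..K})"
  proof
    fix z assume z: "z \<in> lattice \<inter> cball 0 M"
    then obtain m n where zd: "z = f (m,n)" unfolding lattice_def f_def by auto
    have re: "Re z = 1/2 + m + n/2" and im: "Im z = sqrt 3/6 + n * sqrt 3 / 2"
      by (simp_all add: zd f_def a1_def a2_def cis.sel cos_60 sin_60)
    have "\<bar>Re z\<bar> \<le> M" "\<bar>Im z\<bar> \<le> M" using z abs_Re_le_cmod abs_Im_le_cmod[of z]
      by (auto simp: dist_norm intro: order_trans)
    have s3: "sqrt 3 > 1" by simp
    have "sqrt 3 \<le> sqrt 4" by (rule real_sqrt_le_mono) simp
    then have s4: "sqrt 3 \<le> 2" by (simp add: real_sqrt_four)
    have e1: "\<bar>real_of_int n\<bar> * sqrt 3 / 2 = \<bar>Im z - sqrt 3/6\<bar>" using im by (simp add: abs_mult)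
    have "\<bar>Im z - sqrt 3/6\<bar> \<le> \<bar>M\<bar> + 1" 
    proof -
      have "\<bar>Im z - sqrt 3/6\<bar> \<le> \<bar>Im z\<bar> + \<bar>sqrt 3/6\<bar>" by (rule abs_triangle_ineq4)
      moreover have "\<bar>sqrt 3/6\<bar> \<le> 1" using s4 by simp
      ultimately show ?thesis using \<open>\<bar>Im z\<bar> \<le> M\<close> by linarith
    qed
    then have "\<bar>real_of_int n\<bar> * sqrt 3 \<le> 2*\<bar>M\<bar> + 2" using e1 by linarith
    moreover have "\<bar>real_of_int n\<bar> \<le> \<bar>real_of_int n\<bar> * sqrt 3" using s3 by (simp add: mult_le_cancel_left1)
    ultimately have "\<bar>real_of_int n\<bar> \<le> 2*\<bar>M\<bar>+2" by linarith
    moreover have "\<bar>real_of_int m\<bar> \<le> \<bar>M\<bar> + 1/2 + \<bar>real_of_int n\<bar>/2" using \<open>\<bar>Re z\<bar> \<le> M\<close> re by linarith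
    ultimately have "\<bar>n\<bar> \<le> K" "\<bar>m\<bar> \<le> K" unfolding K_def by linarith+
    then show "z \<in> f ` ({-K..K} \<times> {-K..K})" using zd by (intro image_eqI[of _ _ "(m,n)"]) (auto simp: abs_le_iff)
  qed
  then show ?thesis by (rule finite_subset) auto
qed


lemma bond_norm_bound:
  assumes "b \<in> bonds" "bond_norm b \<le> R"
  shows "cmod (fst b) \<le> R + 1"
proof -
  obtain p q where b: "b = (p,q)" by (cases b)
  have pq: "cmod (p - q) = 1" using assms(1) b by (auto simp: bonds_def)
  obtain s where s: "s \<in> closed_segment p q" "infdist 0 (closed_segment p q) = dist 0 s"
    using infdist_attains_inf[of "closed_segment p q" 0] by auto
  have "dist s p \<le> dist p q" using dist_in_closed_segment[OF s(1)] by auto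
  then have "cmod (s - p) \<le> 1" using pq by (simp add: dist_norm)
  moreover have "cmod s \<le> R" using s assms(2) b by (simp add: bond_norm_def)
  moreover have "cmod p \<le> cmod s + cmod (s - p)" 
    using norm_triangle_ineq4[of s "s - p"] by simp
  ultimately show ?thesis using b by simp
qed

lemma pos_cells_dist:
  assumes "C \<in> pos_cells" "x \<in> C" "y \<in> C"
  shows "cmod (x - y) \<le> 1"
  using assms by (cases "x = y") (auto simp: pos_cells_def bonds_def)

lemma ccw_bonds_sub:
  assumes "C \<in> pos_cells" "b \<in> ccw_bonds C"
  shows "b \<in> bonds" "fst b \<in> C" "snd b \<in> C"
  using assms by (auto simp: pos_cells_def ccw_bonds_def)

lemma neg_bond_bonds: "b \<in> bonds \<Longrightarrow> neg_bond b \<in> bonds"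
  by (auto simp: bonds_def neg_bond_def norm_minus_commute)

lemma noncollinear:
  assumes "cmod (q - p) = 1" "cmod (r - p) = 1" "cmod (r - q) = 1"
  shows "Im (cnj (q - p) * (r - p)) \<noteq> 0"
proof
  assume h: "Im (cnj (q - p) * (r - p)) = 0"
  define a where "a = Re (q - p)"
  define b where "b = Im (q - p)"
  define c where "c = Re (r - p)"
  define d where "d = Im (r - p)"
  have 1: "a^2 + b^2 = 1" using assms(1) unfolding a_def b_def cmod_def by simp
  have 2: "c^2 + d^2 = 1" using assms(2) unfolding c_def d_def cmod_def by simp
  have "r - q = (r - p) - (q - p)" by simp
  then have 3: "(c-a)^2 + (d-b)^2 = 1" using assms(3) unfolding a_def b_def c_def d_def cmod_def by simp
  have 4: "a*d - b*c = 0" using h unfolding a_def b_def c_def d_def by (simp add: algebra_simps)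
  have 5: "a*c + b*d = 1/2" using 1 2 3 by (simp add: power2_eq_square algebra_simps)
  have "(a*c+b*d)^2 + (a*d-b*c)^2 = (a^2+b^2)*(c^2+d^2)" by (simp add: power2_eq_square algebra_simps)
  then show False using 1 2 4 5 by (simp add: power2_eq_square)
qed

lemma Im_cnj_id:
  "Im (cnj (r - q) * (p - q)) = Im (cnj (q - p) * (r - p))"
  "Im (cnj (p - r) * (q - r)) = Im (cnj (q - p) * (r - p))"
  "Im (cnj (p - q) * (r - q)) = - Im (cnj (q - p) * (r - p))"
  "Im (cnj (r - p) * (q - p)) = - Im (cnj (q - p) * (r - p))"
  "Im (cnj (q - r) * (p - r)) = - Im (cnj (q - p) * (r - p))"
  by (simp_all add: algebra_simps)

lemma ccw_pos:
  assumes "p \<noteq> q" "q \<noteq> r" "p \<noteq> r" "Im (cnj (q - p) * (r - p)) > 0"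
  shows "ccw_bonds {p,q,r} = {(p,q),(q,r),(r,p)}"
proof -
  note I = Im_cnj_id[of r q p]
  have d1: "{p,q,r} - {p,q} = {r}" "{p,q,r} - {q,r} = {p}" "{p,q,r} - {r,p} = {q}"
    "{p,q,r} - {q,p} = {r}" "{p,q,r} - {r,q} = {p}" "{p,q,r} - {p,r} = {q}"
    using assms(1-3) by auto
  show ?thesis
    unfolding ccw_bonds_def
    using assms I by (auto simp: d1)
qed


lemma pos_cell_cycle:
  assumes "T \<in> pos_cells"
  shows "\<exists>p q r. T = {p,q,r} \<and> p \<noteq> q \<and> q \<noteq> r \<and> p \<noteq> r \<and>
                 ccw_bonds T = {(p,q),(q,r),(r,p)}"
proof -
  obtain x y z where T: "T = {x,y,z}" "x \<noteq> y" "y \<noteq> z" "x \<noteq> z"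
    using assms by (auto simp: pos_cells_def card_3_iff)
  have "cmod (y - x) = 1" "cmod (z - x) = 1" "cmod (z - y) = 1"
    using assms T by (auto simp: pos_cells_def bonds_def)
  then have D: "Im (cnj (y - x) * (z - x)) \<noteq> 0" by (rule noncollinear)
  show ?thesis
  proof (cases "Im (cnj (y - x) * (z - x)) > 0")
    case True
    then show ?thesis using T ccw_pos[of x y z] by blast
  next
    case False
    then have "Im (cnj (z - x) * (y - x)) > 0" proof -
      have "Im (cnj (z - x) * (y - x)) = - Im (cnj (y - x) * (z - x))" by (simp add: algebra_simps)
      then show ?thesis using D False by linarith
    qed
    moreover have "T = {x,z,y}" using T by auto
    ultimately show ?thesis using T ccw_pos[of x z y] by metis
  qed
qed

lemma chain_int_cell:
  assumes "C \<in> pos_cells"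
  shows "chain_int \<gamma> (cell_boundary C) = (\<Sum>b\<in>ccw_bonds C. \<gamma> b)"
proof -
  have "card C = 3" using assms by (auto simp: pos_cells_def)
  then have "finite C" by (metis card.infinite zero_neq_numeral)
  moreover have "ccw_bonds C \<subseteq> C \<times> C" by (auto simp: ccw_bonds_def)
  ultimately have "finite (ccw_bonds C)" by (auto intro: finite_subset)
  then show ?thesis by (simp add: chain_int_def cell_boundary_def sum_unfold_sum_mset)
qed

lemma cycle_int:
  assumes "\<alpha> \<in> Dy_class y" "C \<in> pos_cells"
  shows "(\<Sum>b\<in>ccw_bonds C. \<alpha> b) \<in> \<int>"
proof -
  obtain p q r where T: "C = {p,q,r}" "p \<noteq> q" "q \<noteq> r" "p \<noteq> r"
                 "ccw_bonds C = {(p,q),(q,r),(r,p)}"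
    using pos_cell_cycle[OF assms(2)] by blast
  have sub: "ccw_bonds C \<subseteq> bonds" using ccw_bonds_sub(1)[OF assms(2)] by blast
  have "(\<Sum>b\<in>ccw_bonds C. Dy y b) = 0" using T by (simp add: Dy_def)
  moreover have "(\<Sum>b\<in>ccw_bonds C. Dy y b - \<alpha> b) \<in> \<int>"
    using assms(1) sub by (intro Ints_sum) (auto simp: Dy_class_def)
  ultimately have "- (\<Sum>b\<in>ccw_bonds C. \<alpha> b) \<in> \<int>" by (simp add: sum_subtractf)
  then show ?thesis by (metis Ints_minus minus_minus)
qed

definition refl_pt :: "complex \<Rightarrow> complex \<Rightarrow> complex set \<Rightarrow> complex set" where
  "refl_pt p q C = (\<lambda>z. p + q - z) ` C"

lemma refl_pt_maps:
  assumes "C \<in> pos_cells" "(p,q) \<in> ccw_bonds C"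
  shows "refl_pt p q C \<in> pos_cells" "(q,p) \<in> ccw_bonds (refl_pt p q C)"
proof -
  let ?f = "\<lambda>z. p + q - z"
  have inj: "inj ?f" by (auto simp: inj_def)
  have pq: "p \<in> C" "q \<in> C" "p \<noteq> q" using assms by (auto simp: ccw_bonds_def)
  have lat: "C \<subseteq> lattice" using assms(1) by (auto simp: pos_cells_def)
  have "?f ` C \<subseteq> lattice" using lat pq by (auto intro!: lattice_refl)
  moreover have "card (?f ` C) = 3"
  proof -
    have "inj_on ?f C" using inj by (simp add: inj_on_def inj_def)
    then have "card (?f ` C) = card C" by (rule card_image)
    then show ?thesis using assms(1) by (simp add: pos_cells_def)
  qed
  moreover have "\<forall>x\<in>?f ` C. \<forall>w\<in>?f ` C. x \<noteq> w \<longrightarrow> (x, w) \<in> bonds"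
  proof (intro ballI impI)
    fix x w assume "x \<in> ?f ` C" "w \<in> ?f ` C" "x \<noteq> w"
    then obtain u v where uv: "u \<in> C" "v \<in> C" "x = ?f u" "w = ?f v" "u \<noteq> v" by auto
    then have "(u,v) \<in> bonds" using assms(1) by (auto simp: pos_cells_def)
    then have "cmod (u - v) = 1" by (auto simp: bonds_def)
    moreover have "x - w = v - u" using uv by simp
    ultimately have "cmod (x - w) = 1" by (simp add: norm_minus_commute)
    moreover have "x \<in> lattice" "w \<in> lattice" using \<open>?f ` C \<subseteq> lattice\<close> \<open>x \<in> ?f ` C\<close> \<open>w \<in> ?f ` C\<close>
      by blast+
    ultimately show "(x, w) \<in> bonds" unfolding bonds_def by simp
  qed
  ultimately show "refl_pt p q C \<in> pos_cells" unfolding pos_cells_def refl_pt_def mem_Collect_eq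
    by (intro conjI)
  have h1: "q \<in> ?f ` C" using pq by (intro image_eqI[of _ _ p]) auto
  have h2: "p \<in> ?f ` C" using pq by (intro image_eqI[of _ _ q]) auto
  have h3: "\<forall>r' \<in> ?f ` C - {q, p}. Im (cnj (p - q) * (r' - q)) > 0"
  proof
    fix r' assume "r' \<in> ?f ` C - {q, p}"
    then obtain r where r: "r \<in> C" "r' = ?f r" "r \<noteq> p" "r \<noteq> q" by auto
    then have "Im (cnj (q - p) * (r - p)) > 0" using assms(2) by (auto simp: ccw_bonds_def)
    moreover have "r' - q = p - r" using r by simp
    moreover have "cnj (p - q) * (p - r) = cnj (q - p) * (r - p)" by (simp add: algebra_simps)
    ultimately show "Im (cnj (p - q) * (r' - q)) > 0" by metis
  qed
  show "(q,p) \<in> ccw_bonds (refl_pt p q C)" unfolding refl_pt_def ccw_bonds_def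
    apply (rule CollectI)
    apply (subst case_prod_conv)
    apply (intro conjI)
       apply (rule h1)
      apply (rule h2)
    using pq(3) apply simp
    apply (rule h3)
    done
qed

lemma refl_pt_invol: "refl_pt q p (refl_pt p q C) = C"
proof -
  have "(\<lambda>x. q + p - (p + q - x)) = id" by (rule ext) simp
  then show ?thesis unfolding refl_pt_def image_image by simp
qed

lemma card_cells_neg:
  "card {C \<in> pos_cells. (p,q) \<in> ccw_bonds C} = card {C \<in> pos_cells. (q,p) \<in> ccw_bonds C}"
proof (rule bij_betw_same_card)
  show "bij_betw (refl_pt p q) {C \<in> pos_cells. (p,q) \<in> ccw_bonds C} {C \<in> pos_cells. (q,p) \<in> ccw_bonds C}"
  proof (rule bij_betw_byWitness[where f'="refl_pt q p"])
    show "\<forall>a\<in>{C \<in> pos_cells. (p, q) \<in> ccw_bonds C}. refl_pt q p (refl_pt p q a) = a"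
      by (simp add: refl_pt_invol)
    show "\<forall>a\<in>{C \<in> pos_cells. (q, p) \<in> ccw_bonds C}. refl_pt p q (refl_pt q p a) = a"
      by (simp add: refl_pt_invol)
    show "refl_pt p q ` {C \<in> pos_cells. (p, q) \<in> ccw_bonds C} \<subseteq> {C \<in> pos_cells. (q, p) \<in> ccw_bonds C}"
      using refl_pt_maps by (intro image_subsetI) (simp add: refl_pt_maps)
    show "refl_pt q p ` {C \<in> pos_cells. (q, p) \<in> ccw_bonds C} \<subseteq> {C \<in> pos_cells. (p, q) \<in> ccw_bonds C}"
      using refl_pt_maps by (intro image_subsetI) (simp add: refl_pt_maps)
  qed
qed


lemma finite_ccw: "C \<in> pos_cells \<Longrightarrow> finite (ccw_bonds C)"
proof -
  assume a: "C \<in> pos_cells"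
  have "card C = 3" using a by (auto simp: pos_cells_def)
  then have "finite C" by (metis card.infinite zero_neq_numeral)
  moreover have "ccw_bonds C \<subseteq> C \<times> C" by (auto simp: ccw_bonds_def)
  ultimately show "finite (ccw_bonds C)" by (auto intro: finite_subset)
qed

lemma neg_neg: "neg_bond (neg_bond b) = b"
  by (simp add: neg_bond_def)

lemma card_cells_neg':
  "card {C \<in> pos_cells. neg_bond b \<in> ccw_bonds C} = card {C \<in> pos_cells. b \<in> ccw_bonds C}"
  using card_cells_neg[of "snd b" "fst b"] by (simp add: neg_bond_def)

lemma cancel:
  fixes \<beta> :: "bond \<Rightarrow> real"
  assumes finS: "finite Sb" and Sbb: "Sb \<subseteq> bonds"
    and zero: "\<forall>b\<in>bonds - Sb. \<beta> b = 0"
    and negS: "\<forall>b\<in>Sb. neg_bond b \<in> Sb \<and> \<beta> (neg_bond b) = - \<beta> b"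
    and finA: "finite A'" and Apos: "A' \<subseteq> pos_cells"
    and Afull: "\<forall>C\<in>pos_cells. ccw_bonds C \<inter> Sb \<noteq> {} \<longrightarrow> C \<in> A'"
  shows "(\<Sum>C\<in>A'. \<Sum>b\<in>ccw_bonds C. \<beta> b) = 0"
proof -
  define N where "N b = card {C \<in> pos_cells. b \<in> ccw_bonds C}" for b
  have step1: "(\<Sum>b\<in>ccw_bonds C. \<beta> b) = (\<Sum>b\<in>Sb. if b \<in> ccw_bonds C then \<beta> b else 0)"
    if "C \<in> A'" for C
  proof -
    have Cp: "C \<in> pos_cells" using that Apos by blast
    have "(\<Sum>b\<in>ccw_bonds C. \<beta> b) = (\<Sum>b\<in>Sb \<inter> ccw_bonds C. \<beta> b)"
    proof (rule sum.mono_neutral_right)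
      show "finite (ccw_bonds C)" using finite_ccw[OF Cp] .
      show "Sb \<inter> ccw_bonds C \<subseteq> ccw_bonds C" by blast
      show "\<forall>i\<in>ccw_bonds C - Sb \<inter> ccw_bonds C. \<beta> i = 0"
        using zero ccw_bonds_sub(1)[OF Cp] by blast
    qed
    also have "\<dots> = (\<Sum>b\<in>Sb. if b \<in> ccw_bonds C then \<beta> b else 0)"
      by (rule sum.inter_restrict[OF finS])
    finally show ?thesis .
  qed
  have step2: "(\<Sum>C\<in>A'. if b \<in> ccw_bonds C then \<beta> b else 0) = \<beta> b * real (N b)"
    if "b \<in> Sb" for b
  proof -
    have "(\<Sum>C\<in>A'. if b \<in> ccw_bonds C then \<beta> b else 0) = (\<Sum>C\<in>A' \<inter> {C. b \<in> ccw_bonds C}. \<beta> b)"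
      using sum.inter_restrict[OF finA, of "\<lambda>_. \<beta> b" "{C. b \<in> ccw_bonds C}"] by simp
    also have "A' \<inter> {C. b \<in> ccw_bonds C} = {C \<in> pos_cells. b \<in> ccw_bonds C}"
      using Apos Afull that by blast
    finally show ?thesis by (simp add: N_def)
  qed
  have "(\<Sum>C\<in>A'. \<Sum>b\<in>ccw_bonds C. \<beta> b)
        = (\<Sum>C\<in>A'. \<Sum>b\<in>Sb. if b \<in> ccw_bonds C then \<beta> b else 0)"
    by (rule sum.cong[OF refl]) (rule step1)
  also have "\<dots> = (\<Sum>b\<in>Sb. \<Sum>C\<in>A'. if b \<in> ccw_bonds C then \<beta> b else 0)"
    by (rule sum.swap)
  also have "\<dots> = (\<Sum>b\<in>Sb. \<beta> b * real (N b))"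
    by (rule sum.cong[OF refl]) (rule step2)
  finally have e: "(\<Sum>C\<in>A'. \<Sum>b\<in>ccw_bonds C. \<beta> b) = (\<Sum>b\<in>Sb. \<beta> b * real (N b))" .
  define g where "g b = \<beta> b * real (N b)" for b
  have "(\<Sum>b\<in>Sb. g b) = (\<Sum>b\<in>Sb. g (neg_bond b))"
    by (rule sum.reindex_bij_witness[where i=neg_bond and j=neg_bond])
       (use negS in \<open>auto simp: neg_neg\<close>)
  also have "\<dots> = (\<Sum>b\<in>Sb. - g b)"
  proof (rule sum.cong[OF refl])
    fix b assume "b \<in> Sb"
    then show "g (neg_bond b) = - g b"
      using negS card_cells_neg'[of b] by (simp add: g_def N_def)
  qed
  also have "\<dots> = - (\<Sum>b\<in>Sb. g b)" by (simp add: sum_negf)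
  finally have "(\<Sum>b\<in>Sb. g b) = 0" by simp
  then show ?thesis using e by (simp add: g_def)
qed


lemma chain_int_add: "chain_int \<gamma> (M + N) = chain_int \<gamma> M + chain_int \<gamma> N"
  by (simp add: chain_int_def)

lemma chain_int_boundary:
  "finite A \<Longrightarrow> chain_int \<gamma> (boundary A) = (\<Sum>C\<in>A. chain_int \<gamma> (cell_boundary C))"
  unfolding boundary_def
  by (induction A rule: finite_induct) (simp_all add: chain_int_add, simp add: chain_int_def)

theorem proposition2p3:
  fixes y :: "complex \<Rightarrow> real" and \<alpha> :: "bond \<Rightarrow> real"
  assumes "\<alpha> \<in> Dy_class y"
    and "\<forall>\<epsilon>>0. \<exists>R. \<forall>b\<in>bonds. bond_norm b > R \<longrightarrow> \<bar>\<alpha> b\<bar> < \<epsilon>"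
  shows "\<forall>\<alpha>'\<in>Dy_class y.
           finite (cores \<alpha>') \<and>
           (\<Sum>C\<in>cores \<alpha>'. chain_int \<alpha>' (cell_boundary C))
             = (\<Sum>C\<in>cores \<alpha>. chain_int \<alpha> (cell_boundary C)) \<and>
           (\<forall>A. finite A \<and> A \<subseteq> pos_cells \<and> cores \<alpha> \<subseteq> A \<longrightarrow>
              chain_int \<alpha> (boundary A) = (\<Sum>C\<in>cores \<alpha>. chain_int \<alpha> (cell_boundary C)))"
proof -
  have aD: "\<alpha> b \<in> {-1/2..1/2}" "\<alpha> (neg_bond b) = - \<alpha> b" "Dy y b - \<alpha> b \<in> \<int>" if "b \<in> bonds" for b
    using assms(1) that by (auto simp: Dy_class_def)
  obtain R where far: "\<forall>b\<in>bonds. bond_norm b > R \<longrightarrow> \<bar>\<alpha> b\<bar> < 1/6"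
    using assms(2) by (meson divide_pos_pos zero_less_numeral zero_less_one)
  define K where "K = lattice \<inter> cball 0 (R + 2)"
  have finK: "finite K" unfolding K_def by (rule finite_lattice_ball)
  have finPK: "finite {C. C \<subseteq> K}" using finK by simp
  have cellK: "C \<subseteq> K" if "C \<in> pos_cells" "b \<in> ccw_bonds C" "bond_norm b \<le> R" for C b
  proof
    fix x assume "x \<in> C"
    have b: "b \<in> bonds" "fst b \<in> C" using ccw_bonds_sub[OF that(1,2)] by auto
    have "cmod (fst b) \<le> R + 1" using bond_norm_bound[OF b(1) that(3)] .
    moreover have "cmod (x - fst b) \<le> 1" using pos_cells_dist[OF that(1) \<open>x \<in> C\<close> b(2)] .
    moreover have "cmod x \<le> cmod (fst b) + cmod (x - fst b)"
      using norm_triangle_ineq[of "fst b" "x - fst b"] by simp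
    ultimately have "cmod x \<le> R + 2" by linarith
    moreover have "x \<in> lattice" using that(1) \<open>x \<in> C\<close> by (auto simp: pos_cells_def)
    ultimately show "x \<in> K" by (simp add: K_def)
  qed
  define I where "I \<gamma> C = (\<Sum>b\<in>ccw_bonds C. \<gamma> b)" for \<gamma> :: "bond \<Rightarrow> real" and C
  have coresI: "cores \<gamma> = {C \<in> pos_cells. I \<gamma> C \<noteq> 0}" for \<gamma>
    unfolding cores_def I_def using chain_int_cell by auto
  have sumI: "(\<Sum>C\<in>cores \<gamma>. chain_int \<gamma> (cell_boundary C)) = (\<Sum>C\<in>cores \<gamma>. I \<gamma> C)" for \<gamma>
    by (rule sum.cong[OF refl]) (simp add: cores_def chain_int_cell I_def)
  have cores_sub: "cores \<alpha> \<subseteq> {C. C \<subseteq> K}"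
  proof
    fix C assume C: "C \<in> cores \<alpha>"
    then have Cp: "C \<in> pos_cells" and nz: "I \<alpha> C \<noteq> 0" using coresI by auto
    show "C \<in> {C. C \<subseteq> K}"
    proof (cases "\<exists>b\<in>ccw_bonds C. bond_norm b \<le> R")
      case True
      then show ?thesis using cellK Cp by blast
    next
      case False
      obtain p q r where T: "C = {p,q,r}" "p \<noteq> q" "q \<noteq> r" "p \<noteq> r"
                 "ccw_bonds C = {(p,q),(q,r),(r,p)}"
        using pos_cell_cycle[OF Cp] by blast
      have sm: "\<bar>\<alpha> b\<bar> < 1/6" if "b \<in> ccw_bonds C" for b
        using far False that ccw_bonds_sub(1)[OF Cp that] by auto
      have "I \<alpha> C = \<alpha> (p,q) + \<alpha> (q,r) + \<alpha> (r,p)" using T by (simp add: I_def)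
      moreover have "\<bar>\<alpha> (p,q)\<bar> < 1/6" "\<bar>\<alpha> (q,r)\<bar> < 1/6" "\<bar>\<alpha> (r,p)\<bar> < 1/6"
        using sm T(5) by auto
      ultimately have "\<bar>I \<alpha> C\<bar> < 1" by linarith
      moreover have "I \<alpha> C \<in> \<int>" unfolding I_def by (rule cycle_int[OF assms(1) Cp])
      ultimately have "I \<alpha> C = 0" using Ints_nonzero_abs_less1 by blast
      then show ?thesis using nz by simp
    qed
  qed
  have fin_cores: "finite (cores \<alpha>)" using cores_sub finPK by (rule finite_subset)
  have cpos: "cores \<gamma> \<subseteq> pos_cells" for \<gamma> by (auto simp: cores_def)
  have part3: "\<forall>A. finite A \<and> A \<subseteq> pos_cells \<and> cores \<alpha> \<subseteq> A \<longrightarrow>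
              chain_int \<alpha> (boundary A) = (\<Sum>C\<in>cores \<alpha>. chain_int \<alpha> (cell_boundary C))"
  proof (intro allI impI)
    fix A assume A: "finite A \<and> A \<subseteq> pos_cells \<and> cores \<alpha> \<subseteq> A"
    have "chain_int \<alpha> (boundary A) = (\<Sum>C\<in>A. chain_int \<alpha> (cell_boundary C))"
      using A chain_int_boundary by blast
    also have "\<dots> = (\<Sum>C\<in>cores \<alpha>. chain_int \<alpha> (cell_boundary C))"
      using A by (intro sum.mono_neutral_right) (auto simp: cores_def)
    finally show "chain_int \<alpha> (boundary A) = (\<Sum>C\<in>cores \<alpha>. chain_int \<alpha> (cell_boundary C))" .
  qed
  show ?thesis
  proof (intro ballI conjI part3)
    fix \<alpha>' assume a': "\<alpha>' \<in> Dy_class y"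
    have a'D: "\<alpha>' b \<in> {-1/2..1/2}" "\<alpha>' (neg_bond b) = - \<alpha>' b" "Dy y b - \<alpha>' b \<in> \<int>" if "b \<in> bonds" for b
      using a' that by (auto simp: Dy_class_def)
    define Sb where "Sb = {b \<in> bonds. \<alpha>' b \<noteq> \<alpha> b}"
    define \<beta> where "\<beta> b = \<alpha>' b - \<alpha> b" for b
    have Sfar: "bond_norm b \<le> R" if "b \<in> Sb" for b
    proof (rule ccontr)
      assume "\<not> bond_norm b \<le> R"
      have bb: "b \<in> bonds" "\<alpha>' b \<noteq> \<alpha> b" using that by (auto simp: Sb_def)
      have "\<bar>\<alpha> b\<bar> < 1/6" using far bb \<open>\<not> bond_norm b \<le> R\<close> by auto
      moreover have "\<bar>\<alpha>' b\<bar> \<le> 1/2" using a'D(1)[OF bb(1)] by auto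
      ultimately have "\<bar>\<alpha>' b - \<alpha> b\<bar> < 1" by linarith
      moreover have "\<alpha>' b - \<alpha> b \<in> \<int>"
      proof -
        have "(Dy y b - \<alpha> b) - (Dy y b - \<alpha>' b) \<in> \<int>" using aD(3)[OF bb(1)] a'D(3)[OF bb(1)] by (rule Ints_diff)
        then show ?thesis by simp
      qed
      ultimately have "\<alpha>' b - \<alpha> b = 0" using Ints_nonzero_abs_less1 by blast
      then show False using bb by simp
    qed
    have finS: "finite Sb"
    proof (rule finite_subset)
      show "Sb \<subseteq> K \<times> K"
      proof
        fix b assume bS: "b \<in> Sb"
        obtain p q where bpq: "b = (p,q)" by (cases b)
        have bb: "b \<in> bonds" using bS by (simp add: Sb_def)
        have "cmod p \<le> R + 1" using bond_norm_bound[OF bb Sfar[OF bS]] bpq by simp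
        moreover have "cmod (q - p) = 1" using bb bpq by (auto simp: bonds_def norm_minus_commute)
        moreover have "cmod q \<le> cmod p + cmod (q - p)" using norm_triangle_ineq[of p "q - p"] by simp
        moreover have "p \<in> lattice" "q \<in> lattice" using bb bpq by (auto simp: bonds_def)
        ultimately show "b \<in> K \<times> K" using bpq by (simp add: K_def)
      qed
      show "finite (K \<times> K)" using finK by simp
    qed
    define A' where "A' = {C \<in> pos_cells. ccw_bonds C \<inter> Sb \<noteq> {}}"
    have A'K: "A' \<subseteq> {C. C \<subseteq> K}"
    proof
      fix C assume "C \<in> A'"
      then obtain b where "C \<in> pos_cells" "b \<in> ccw_bonds C" "b \<in> Sb" unfolding A'_def by blast
      then show "C \<in> {C. C \<subseteq> K}" using cellK Sfar by blast
    qed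
    have finA: "finite A'" using A'K finPK by (rule finite_subset)
    have Apos: "A' \<subseteq> pos_cells" by (auto simp: A'_def)
    have same: "I \<alpha>' C = I \<alpha> C" if "C \<in> pos_cells" "C \<notin> A'" for C
      unfolding I_def
    proof (rule sum.cong[OF refl])
      fix b assume "b \<in> ccw_bonds C"
      then have "b \<in> bonds" "b \<notin> Sb" using that ccw_bonds_sub(1)[OF that(1)] by (auto simp: A'_def)
      then show "\<alpha>' b = \<alpha> b" by (simp add: Sb_def)
    qed
    have sub': "cores \<alpha>' \<subseteq> cores \<alpha> \<union> A'"
      using same by (auto simp: coresI)
    define U where "U = cores \<alpha> \<union> A'"
    have finU: "finite U" using fin_cores finA by (simp add: U_def)
    have Upos: "U \<subseteq> pos_cells" using cpos Apos by (auto simp: U_def)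
    show "finite (cores \<alpha>')" using sub' finU by (auto simp: U_def intro: finite_subset)
    have s1: "(\<Sum>C\<in>cores \<alpha>'. I \<alpha>' C) = (\<Sum>C\<in>U. I \<alpha>' C)"
      using finU sub' Upos by (intro sum.mono_neutral_left) (auto simp: U_def coresI)
    have s2: "(\<Sum>C\<in>cores \<alpha>. I \<alpha> C) = (\<Sum>C\<in>U. I \<alpha> C)"
      using finU Upos by (intro sum.mono_neutral_left) (auto simp: U_def coresI)
    have s3: "(\<Sum>C\<in>U. I \<alpha>' C) - (\<Sum>C\<in>U. I \<alpha> C) = (\<Sum>C\<in>U. I \<beta> C)"
      by (simp add: I_def \<beta>_def sum_subtractf)
    have s4: "(\<Sum>C\<in>U. I \<beta> C) = (\<Sum>C\<in>A'. I \<beta> C)"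
    proof (rule sum.mono_neutral_right[OF finU])
      show "A' \<subseteq> U" by (simp add: U_def)
      show "\<forall>C\<in>U - A'. I \<beta> C = 0"
      proof
        fix C assume "C \<in> U - A'"
        then have "C \<in> pos_cells" "C \<notin> A'" using Upos by auto
        then have "I \<alpha>' C = I \<alpha> C" by (rule same)
        then show "I \<beta> C = 0" by (simp add: I_def \<beta>_def sum_subtractf)
      qed
    qed
    have s5: "(\<Sum>C\<in>A'. I \<beta> C) = 0"
      unfolding I_def
    proof (rule cancel[OF finS _ _ _ finA Apos])
      show "Sb \<subseteq> bonds" by (auto simp: Sb_def)
      show "\<forall>b\<in>bonds - Sb. \<beta> b = 0" by (auto simp: Sb_def \<beta>_def)
      show "\<forall>b\<in>Sb. neg_bond b \<in> Sb \<and> \<beta> (neg_bond b) = - \<beta> b"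
        using aD(2) a'D(2) neg_bond_bonds by (auto simp: Sb_def \<beta>_def)
      show "\<forall>C\<in>pos_cells. ccw_bonds C \<inter> Sb \<noteq> {} \<longrightarrow> C \<in> A'" by (auto simp: A'_def)
    qed
    show "(\<Sum>C\<in>cores \<alpha>'. chain_int \<alpha>' (cell_boundary C))
             = (\<Sum>C\<in>cores \<alpha>. chain_int \<alpha> (cell_boundary C))"
      unfolding sumI using s1 s2 s3 s4 s5 by linarith
  qed
qed

end
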